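(* Let $g$ be a smooth metric of revolution on $S^2$, i.e. on the complement of two points (the poles) there are coordinates $(r,\phi)\in(0,R)\times\mathbb{R}/2\pi\mathbb{Z}$ with $g=\mathrm{d}r^2+a(r)^2\mathrm{d}\phi^2$ for a function $a:[0,R]\to[0,\infty)$ (positive on $(0,R)$, with $r=0$ and $r=R$ corresponding to the two poles), and assume that the Gaussian curvature $K$ of $g$ is non-constant. Let $\mu$ be the area form of $g$. Then $K$ does not induce a Hamiltonian circle action on $(S^2,\mu)$, i.e. there is no $T>0$ such that the time-$T$ map of the Hamiltonian flow of $K$ on $(S^2,\mu)$ is the identity.
   Context: The Hamiltonian flow of $K$ on $(S^2,\mu)$ is the flow of the vector field $X_K$ defined by $\mu(X_K,\cdot)=-\mathrm{d}K$. *)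

theory Defs
  imports "HOL-Analysis.Analysis"
begin

definition smooth1_on :: "real set \<Rightarrow> (real \<Rightarrow> real) \<Rightarrow> bool" where
  "smooth1_on U f \<longleftrightarrow>
     (\<exists>D :: nat \<Rightarrow> real \<Rightarrow> real. (\<forall>x\<in>U. D 0 x = f x) \<and>
        (\<forall>n. \<forall>x\<in>U. (D n has_real_derivative D (Suc n) x) (at x)))"

text \<open>C-infinity functions of two real variables on a set U (to be used with U open):
  D ds is the iterated partial derivative along the directions in the list ds
  (0 = first coordinate, 1 = second coordinate).\<close>
definition smooth2_on :: "(real \<times> real) set \<Rightarrow> (real \<times> real \<Rightarrow> real) \<Rightarrow> bool" where
  "smooth2_on U f \<longleftrightarrow>
     (\<exists>D :: nat list \<Rightarrow> real \<times> real \<Rightarrow> real. (\<forall>x\<in>U. D [] x = f x) \<and>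
        (\<forall>ds. \<forall>x\<in>U. (D ds has_derivative
            (\<lambda>h. fst h * D (0 # ds) x + snd h * D (1 # ds) x)) (at x)))"

text \<open>Components of the metric  d rho^2 + b(rho)^2 d phi^2  in the Cartesian chart
  (x,y) = (rho cos phi, rho sin phi) around a pole, on the punctured disc.\<close>
definition polar_g11 :: "(real \<Rightarrow> real) \<Rightarrow> real \<times> real \<Rightarrow> real" where
  "polar_g11 b p = (let x = fst p; y = snd p; \<rho> = norm p in
      x\<^sup>2 / \<rho>\<^sup>2 + (b \<rho>)\<^sup>2 * y\<^sup>2 / \<rho> ^ 4)"

definition polar_g12 :: "(real \<Rightarrow> real) \<Rightarrow> real \<times> real \<Rightarrow> real" where
  "polar_g12 b p = (let x = fst p; y = snd p; \<rho> = norm p in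
      x * y / \<rho>\<^sup>2 - (b \<rho>)\<^sup>2 * x * y / \<rho> ^ 4)"

definition polar_g22 :: "(real \<Rightarrow> real) \<Rightarrow> real \<times> real \<Rightarrow> real" where
  "polar_g22 b p = (let x = fst p; y = snd p; \<rho> = norm p in
      y\<^sup>2 / \<rho>\<^sup>2 + (b \<rho>)\<^sup>2 * x\<^sup>2 / \<rho> ^ 4)"

text \<open>The metric  d rho^2 + b(rho)^2 d phi^2  (rho = distance from the pole, valid for
  0 < rho < R) extends to a smooth Riemannian metric across the pole rho = 0, i.e. its
  components in the Cartesian chart around the pole extend smoothly and positive
  definitely to the origin.\<close>
definition pole_smooth :: "real \<Rightarrow> (real \<Rightarrow> real) \<Rightarrow> bool" where
  "pole_smooth R b \<longleftrightarrow>
     (\<exists>\<epsilon>>0. \<epsilon> \<le> R \<and> (\<exists>G11 G12 G22.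
        smooth2_on (ball 0 \<epsilon>) G11 \<and> smooth2_on (ball 0 \<epsilon>) G12 \<and> smooth2_on (ball 0 \<epsilon>) G22 \<and>
        (\<forall>p \<in> ball 0 \<epsilon> - {0}. G11 p = polar_g11 b p \<and> G12 p = polar_g12 b p \<and>
                              G22 p = polar_g22 b p) \<and>
        G11 0 > 0 \<and> G11 0 * G22 0 - (G12 0)\<^sup>2 > 0))"

text \<open>Gaussian curvature of  dr^2 + a(r)^2 dphi^2  at radius r.\<close>
definition gauss_curv :: "(real \<Rightarrow> real) \<Rightarrow> real \<Rightarrow> real" where
  "gauss_curv a r = - deriv (deriv a) r / a r"

text \<open>The complement of the poles, in coordinates (r, phi) with phi in R (to be read mod 2 pi).\<close>
definition mid_region :: "real \<Rightarrow> (real \<times> real) set" where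
  "mid_region R = {0<..<R} \<times> UNIV"

text \<open>Area form mu = a(r) dr wedge dphi, evaluated on tangent vectors v, w at p = (r, phi).\<close>
definition area_form :: "(real \<Rightarrow> real) \<Rightarrow> real \<times> real \<Rightarrow> real \<times> real \<Rightarrow> real \<times> real \<Rightarrow> real" where
  "area_form a p v w = a (fst p) * (fst v * snd w - snd v * fst w)"

definition is_hamiltonian_vf ::
  "(real \<times> real \<Rightarrow> real \<times> real \<Rightarrow> real \<times> real \<Rightarrow> real) \<Rightarrow> (real \<times> real) set
    \<Rightarrow> (real \<times> real \<Rightarrow> real) \<Rightarrow> (real \<times> real \<Rightarrow> real \<times> real) \<Rightarrow> bool" where
  "is_hamiltonian_vf \<mu> U H X \<longleftrightarrow>
     (\<forall>p\<in>U. \<exists>dH. (H has_derivative dH) (at p) \<and> (\<forall>w. \<mu> p (X p) w = - dH w))"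

text \<open>The time-T map of the Hamiltonian flow of the curvature K on (S^2, mu) is the identity
  (checked on the complement of the poles, in (r, phi) coordinates, phi mod 2 pi):
  every point p has a flow line on [0,T] starting at p and returning to p at time T.\<close>
definition time_map_identity :: "(real \<Rightarrow> real) \<Rightarrow> real \<Rightarrow> real \<Rightarrow> bool" where
  "time_map_identity a R T \<longleftrightarrow>
     (\<exists>X. is_hamiltonian_vf (area_form a) (mid_region R) (\<lambda>p. gauss_curv a (fst p)) X \<and>
        (\<forall>p \<in> mid_region R. \<exists>\<gamma> :: real \<Rightarrow> real \<times> real.
            \<gamma> 0 = p \<and>
            (\<forall>t\<in>{0..T}. \<gamma> t \<in> mid_region R \<and>
                 (\<gamma> has_vector_derivative X (\<gamma> t)) (at t within {0..T})) \<and>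
            fst (\<gamma> T) = fst p \<and> (\<exists>k::int. snd (\<gamma> T) = snd p + 2 * pi * of_int k)))"

end

theory Submission
  imports Defs
begin

lemma pole_limits:
  fixes b B1 :: "real \<Rightarrow> real"
  assumes ps: "pole_smooth R b" and pos: "\<forall>s\<in>{0<..<R}. b s > 0"
    and der: "\<forall>s\<in>{0<..<R}. (b has_real_derivative B1 s) (at s)"
  shows "(b \<longlongrightarrow> 0) (at_right 0) \<and> (B1 \<longlongrightarrow> 1) (at_right 0)"
proof -
  obtain \<epsilon> G11 G12 G22 where e: "\<epsilon> > 0" "\<epsilon> \<le> R" and sm: "smooth2_on (ball 0 \<epsilon>) G22"
    and eq: "\<forall>p \<in> ball 0 \<epsilon> - {0}. G22 p = polar_g22 b p"
    using ps unfolding pole_smooth_def by blast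
  obtain D :: "nat list \<Rightarrow> real \<times> real \<Rightarrow> real" where D0: "\<forall>x\<in>ball 0 \<epsilon>. D [] x = G22 x"
    and DD: "\<forall>ds. \<forall>x\<in>ball 0 \<epsilon>. (D ds has_derivative
            (\<lambda>h. fst h * D (0 # ds) x + snd h * D (1 # ds) x)) (at x)"
    using sm unfolding smooth2_on_def by blast
  have Gd: "(G22 has_derivative (\<lambda>h. fst h * D [0] x + snd h * D [1] x)) (at x)"
    if "x \<in> ball 0 \<epsilon>" for x
    using has_derivative_transform_within_open[OF DD[rule_format, of x "[]"] open_ball that] D0 that
    by auto
  have inball: "(\<rho>, 0::real) \<in> ball 0 \<epsilon>" "(0::real, \<rho>) \<in> ball 0 \<epsilon>" if "\<bar>\<rho>\<bar> < \<epsilon>" for \<rho> :: real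
    using that by (auto simp: norm_Pair)
  define h where "h \<rho> = G22 (\<rho>, 0)" for \<rho>
  define hd where "hd \<rho> = D [0] (\<rho>, 0)" for \<rho>
  have hder: "(h has_real_derivative hd \<rho>) (at \<rho>)" if "\<bar>\<rho>\<bar> < \<epsilon>" for \<rho>
  proof -
    have l: "((\<lambda>t::real. (t, 0::real)) has_derivative (\<lambda>t. (t, 0))) (at \<rho>)"
      by (auto intro!: derivative_eq_intros)
    have "((\<lambda>t. G22 (t, 0)) has_derivative (\<lambda>t. fst (t,0::real) * D [0] (\<rho>,0) + snd (t,0::real) * D [1] (\<rho>,0))) (at \<rho>)"
      using diff_chain_at[OF l Gd[OF inball(1)[OF that]]] by (simp add: o_def)
    moreover have "(\<lambda>t. t * D [0] (\<rho>, 0)) = (*) (D [0] (\<rho>, 0))" by (rule ext) (simp add: mult.commute)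
    ultimately show ?thesis unfolding has_field_derivative_def h_def hd_def
      by simp
  qed
  have contG: "isCont G22 0"
    using has_derivative_continuous[OF Gd[of 0]] e by simp
  have contD: "isCont (D [0]) 0"
    using has_derivative_continuous[OF DD[rule_format, of "0::real*real" "[0]"]] e by simp
  have hdlim: "(hd \<longlongrightarrow> hd 0) (at_right 0)"
  proof -
    have "isCont (\<lambda>t::real. (t, 0::real)) 0" by simp
    then have "isCont (\<lambda>t. D [0] (t, 0)) 0"
      using continuous_at_compose[of 0 "\<lambda>t::real. (t, 0::real)" "D [0]"] contD
      by (simp add: o_def zero_prod_def)
    then show ?thesis unfolding hd_def isCont_def by (simp add: filterlim_at_split)
  qed
  have hlim: "(h \<longlongrightarrow> G22 0) (at_right 0)"
  proof -
    have "isCont (\<lambda>t::real. (t, 0::real)) 0" by simp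
    then have "isCont (\<lambda>t. G22 (t, 0)) 0"
      using continuous_at_compose[of 0 "\<lambda>t::real. (t, 0::real)" "G22"] contG
      by (simp add: o_def zero_prod_def)
    then show ?thesis unfolding h_def isCont_def by (simp add: filterlim_at_split zero_prod_def)
  qed
  have ev: "eventually (\<lambda>\<rho>. 0 < \<rho> \<and> \<rho> < \<epsilon>) (at_right (0::real))"
    using e unfolding eventually_at_right_field by auto
  have G1: "G22 0 = 1"
  proof -
    have "isCont (\<lambda>t::real. (0::real, t)) 0" by simp
    then have "isCont (\<lambda>t. G22 (0, t)) 0"
      using continuous_at_compose[of 0 "\<lambda>t::real. (0::real, t)" "G22"] contG
      by (simp add: o_def zero_prod_def)
    then have t1: "((\<lambda>t. G22 (0, t)) \<longlongrightarrow> G22 0) (at_right 0)"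
      unfolding isCont_def by (simp add: filterlim_at_split zero_prod_def)
    have "eventually (\<lambda>t. G22 (0, t) = 1) (at_right (0::real))"
      using ev
    proof eventually_elim
      case (elim t)
      then have "G22 (0,t) = polar_g22 b (0,t)" using eq inball[of t] by (auto simp: zero_prod_def)
      also have "\<dots> = 1" using elim by (simp add: polar_g22_def norm_Pair)
      finally show ?case .
    qed
    then have "((\<lambda>t. G22 (0, t)) \<longlongrightarrow> 1) (at_right 0)"
      by (simp add: tendsto_eventually)
    then show ?thesis using t1 tendsto_unique by (metis trivial_limit_at_right_real)
  qed
  have hval: "h \<rho> = (b \<rho>)\<^sup>2 / \<rho>\<^sup>2" if "0 < \<rho>" "\<rho> < \<epsilon>" for \<rho>
  proof -
    have "h \<rho> = polar_g22 b (\<rho>,0)" using eq inball[of \<rho>] that unfolding h_def by (auto simp: zero_prod_def)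
    also have "\<dots> = (b \<rho>)\<^sup>2 / \<rho>\<^sup>2" using that by (simp add: polar_g22_def norm_Pair power2_eq_square power4_eq_xxxx)
    finally show ?thesis .
  qed
  have hpos: "h \<rho> > 0" if "0 < \<rho>" "\<rho> < \<epsilon>" for \<rho>
  proof -
    have "b \<rho> > 0" using pos that e by auto
    then show ?thesis using hval[OF that] that by simp
  qed
  have bval: "b \<rho> = \<rho> * sqrt (h \<rho>)" if "0 < \<rho>" "\<rho> < \<epsilon>" for \<rho>
  proof -
    have "b \<rho> > 0" using pos that e by auto
    then show ?thesis using hval[OF that] that
      by (simp add: real_sqrt_divide)
  qed
  have B1val: "B1 \<rho> = sqrt (h \<rho>) + \<rho> * (hd \<rho> / (2 * sqrt (h \<rho>)))" if "0 < \<rho>" "\<rho> < \<epsilon>" for \<rho>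
  proof -
    have "((\<lambda>t. t * sqrt (h t)) has_real_derivative (sqrt (h \<rho>) + \<rho> * (hd \<rho> / (2 * sqrt (h \<rho>))))) (at \<rho>)"
      using hder[of \<rho>] hpos[OF that] that
      by (auto intro!: derivative_eq_intros simp: field_simps)
    then have "(b has_real_derivative (sqrt (h \<rho>) + \<rho> * (hd \<rho> / (2 * sqrt (h \<rho>))))) (at \<rho>)"
      by (rule has_field_derivative_transform_within_open[of _ _ _ "{0<..<\<epsilon>}"])
         (use that bval in auto)
    moreover have "(b has_real_derivative B1 \<rho>) (at \<rho>)" using der that e by auto
    ultimately show ?thesis using DERIV_unique by blast
  qed
  have "((\<lambda>t. t * sqrt (h t)) \<longlongrightarrow> 0 * sqrt (G22 0)) (at_right 0)"
    by (intro tendsto_intros hlim)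
  moreover have "eventually (\<lambda>t. t * sqrt (h t) = b t) (at_right 0)"
    using ev by eventually_elim (use bval in auto)
  ultimately have L1: "(b \<longlongrightarrow> 0) (at_right 0)"
    using Lim_transform_eventually by fastforce
  have "((\<lambda>t. sqrt (h t) + t * (hd t / (2 * sqrt (h t)))) \<longlongrightarrow> sqrt (G22 0) + 0 * (hd 0 / (2 * sqrt (G22 0)))) (at_right 0)"
    by (intro tendsto_intros hlim hdlim) (use G1 in auto)
  moreover have "eventually (\<lambda>t. sqrt (h t) + t * (hd t / (2 * sqrt (h t))) = B1 t) (at_right 0)"
    using ev by eventually_elim (use B1val in auto)
  ultimately have L2: "(B1 \<longlongrightarrow> 1) (at_right 0)"
    using Lim_transform_eventually G1 by fastforce
  show ?thesis using L1 L2 by simp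
qed


lemma hvd_fst:
  assumes "(\<gamma> has_vector_derivative V) F"
  shows "((\<lambda>t. fst (\<gamma> t)) has_vector_derivative fst V) F"
  using has_derivative_fst[OF assms[unfolded has_vector_derivative_def]]
  by (simp add: has_vector_derivative_def)

lemma hvd_snd:
  assumes "(\<gamma> has_vector_derivative V) F"
  shows "((\<lambda>t. snd (\<gamma> t)) has_vector_derivative snd V) F"
  using has_derivative_snd[OF assms[unfolded has_vector_derivative_def]]
  by (simp add: has_vector_derivative_def)

theorem theorem5p1:
  fixes a :: "real \<Rightarrow> real" and R :: real
  assumes "R > 0"
    and "continuous_on {0..R} a"
    and "\<forall>r\<in>{0..R}. a r \<ge> 0"
    and "\<forall>r\<in>{0<..<R}. a r > 0"
    and "smooth1_on {0<..<R} a"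
    and "pole_smooth R a"
    and "pole_smooth R (\<lambda>s. a (R - s))"
    and "\<not> (\<exists>c. \<forall>r\<in>{0<..<R}. gauss_curv a r = c)"
  shows "\<not> (\<exists>T>0. time_map_identity a R T)"
proof
  assume "\<exists>T>0. time_map_identity a R T"
  then obtain T where T: "T > 0" "time_map_identity a R T" by blast
  define I where "I = {0<..<R}"
  have oI: "open I" unfolding I_def by simp
  have apos: "\<And>x. x \<in> I \<Longrightarrow> a x > 0" using assms(4) I_def by auto
  obtain A :: "nat \<Rightarrow> real \<Rightarrow> real" where A0: "\<forall>x\<in>I. A 0 x = a x"
    and AD: "\<forall>n. \<forall>x\<in>I. (A n has_real_derivative A (Suc n) x) (at x)"
    using assms(5) unfolding smooth1_on_def I_def by blast
  have AD': "(A n has_real_derivative A (Suc n) x) (at x)" if "x \<in> I" for n x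
    using AD that by blast
  have dera: "(a has_real_derivative A 1 x) (at x)" if "x \<in> I" for x
    using has_field_derivative_transform_within_open[OF AD'[OF that, of 0] oI that] A0 by simp
  have deriv1: "deriv a x = A 1 x" if "x \<in> I" for x
    using DERIV_imp_deriv[OF dera[OF that]] .
  have deriv2: "deriv (deriv a) x = A 2 x" if "x \<in> I" for x
  proof -
    have "(deriv a has_real_derivative A 2 x) (at x)"
      using has_field_derivative_transform_within_open[OF AD'[OF that, of 1] oI that] deriv1
      by (simp add: numeral_2_eq_2)
    then show ?thesis by (rule DERIV_imp_deriv)
  qed
  define Kf where "Kf x = - A 2 x / A 0 x" for x
  define Kd where "Kd x = - (A 3 x * A 0 x - A 2 x * A 1 x) / (A 0 x)\<^sup>2" for x
  have A0pos: "A 0 x > 0" if "x \<in> I" for x using A0 apos that by auto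
  have gK: "gauss_curv a x = Kf x" if "x \<in> I" for x
    unfolding gauss_curv_def Kf_def using deriv2[OF that] A0 that by simp
  have Kder: "(Kf has_real_derivative Kd x) (at x)" if "x \<in> I" for x
  proof -
    have d2: "(A 2 has_real_derivative A 3 x) (at x)" using AD'[OF that, of 2] by (simp add: numeral_3_eq_3)
    have d0: "(A 0 has_real_derivative A 1 x) (at x)" using AD'[OF that, of 0] by simp
    show ?thesis unfolding Kf_def[abs_def] Kd_def
      using d2 d0 A0pos[OF that]
      by (auto intro!: derivative_eq_intros simp: field_simps power2_eq_square)
  qed
  have contA: "continuous_on I (A n)" for n
    by (rule continuous_at_imp_continuous_on) (use AD' DERIV_isCont in blast)
  have contKd: "continuous_on I Kd"
    unfolding Kd_def[abs_def]
    by (intro continuous_intros contA) (auto dest: A0pos)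
  obtain X where HX: "is_hamiltonian_vf (area_form a) (mid_region R) (\<lambda>p. gauss_curv a (fst p)) X"
    and flow: "\<forall>p \<in> mid_region R. \<exists>\<gamma> :: real \<Rightarrow> real \<times> real.
            \<gamma> 0 = p \<and>
            (\<forall>t\<in>{0..T}. \<gamma> t \<in> mid_region R \<and>
                 (\<gamma> has_vector_derivative X (\<gamma> t)) (at t within {0..T})) \<and>
            fst (\<gamma> T) = fst p \<and> (\<exists>k::int. snd (\<gamma> T) = snd p + 2 * pi * of_int k)"
    using T(2) unfolding time_map_identity_def by blast
  have midI: "p \<in> mid_region R \<longleftrightarrow> fst p \<in> I" for p
    unfolding mid_region_def I_def by (cases p) auto
  have Xval: "fst (X p) = 0 \<and> snd (X p) = Kd (fst p) / a (fst p)" if "fst p \<in> I" for p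
  proof -
    have pm: "p \<in> mid_region R" using midI that by simp
    obtain dH where dH: "((\<lambda>p. gauss_curv a (fst p)) has_derivative dH) (at p)"
      "\<forall>w. area_form a p (X p) w = - dH w"
      using HX pm unfolding is_hamiltonian_vf_def by blast
    have "((\<lambda>q. Kf (fst q)) has_derivative (\<lambda>w. Kd (fst p) * fst w)) (at p)"
    proof -
      have "(Kf has_derivative (\<lambda>h. Kd (fst p) * h)) (at (fst p))"
        using Kder[OF that] unfolding has_field_derivative_def by simp
      from diff_chain_at[OF has_derivative_fst[OF has_derivative_ident] this]
      show ?thesis by (simp add: o_def)
    qed
    then have "((\<lambda>q. gauss_curv a (fst q)) has_derivative (\<lambda>w. Kd (fst p) * fst w)) (at p)"
      by (rule has_derivative_transform_within_open[where s="mid_region R"])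
         (use pm that in \<open>auto simp: gK mid_region_def I_def intro!: open_Times\<close>)
    then have dHe: "dH = (\<lambda>w. Kd (fst p) * fst w)" using has_derivative_unique dH(1) by blast
    have e1: "a (fst p) * fst (X p) = 0"
      using dH(2)[rule_format, of "(0,1)"] dHe by (simp add: area_form_def)
    have e2: "a (fst p) * (- snd (X p)) = - Kd (fst p)"
      using dH(2)[rule_format, of "(1,0)"] dHe by (simp add: area_form_def)
    show ?thesis using e1 e2 apos[OF that] by (auto simp: field_simps)
  qed
  have intk: "\<exists>k::int. T * (Kd r / a r) = 2 * pi * of_int k" if r: "r \<in> I" for r
  proof -
    obtain \<gamma> :: "real \<Rightarrow> real \<times> real" where g0: "\<gamma> 0 = (r, 0)"
      and gt: "\<forall>t\<in>{0..T}. \<gamma> t \<in> mid_region R \<and> (\<gamma> has_vector_derivative X (\<gamma> t)) (at t within {0..T})"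
      and gT: "\<exists>k::int. snd (\<gamma> T) = snd (r, 0::real) + 2 * pi * of_int k"
      using flow midI[of "(r, 0)"] r by fastforce
    have "((\<lambda>t. fst (\<gamma> t)) has_vector_derivative 0) (at t within {0..T})" if "t \<in> {0..T}" for t
    proof -
      have "\<gamma> t \<in> mid_region R" and d: "(\<gamma> has_vector_derivative X (\<gamma> t)) (at t within {0..T})"
        using gt[rule_format, OF that] by auto
      then have "fst (X (\<gamma> t)) = 0" using Xval midI by blast
      then show ?thesis using hvd_fst[OF d] by simp
    qed
    then obtain c where "\<And>t. t \<in> {0..T} \<Longrightarrow> fst (\<gamma> t) = c"
      using has_vector_derivative_zero_constant[of "{0..T}" "\<lambda>t. fst (\<gamma> t)"] by auto
    then have fstg: "\<And>t. t \<in> {0..T} \<Longrightarrow> fst (\<gamma> t) = r" using g0 T(1)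
      by (metis atLeastAtMost_iff fst_conv order_refl less_imp_le)
    define v where "v = Kd r / a r"
    have "((\<lambda>t. snd (\<gamma> t) - t * v) has_vector_derivative 0) (at t within {0..T})" if "t \<in> {0..T}" for t
    proof -
      have "((\<lambda>t. snd (\<gamma> t)) has_vector_derivative v) (at t within {0..T})"
        using hvd_snd[of \<gamma> "X (\<gamma> t)"] gt that Xval[of "\<gamma> t"] fstg[OF that] r v_def by auto
      then have "((\<lambda>t. snd (\<gamma> t) - t * v) has_vector_derivative v - 1 * v) (at t within {0..T})"
        by (intro derivative_intros) auto
      then show ?thesis by simp
    qed
    then obtain c2 where c2: "\<And>t. t \<in> {0..T} \<Longrightarrow> snd (\<gamma> t) - t * v = c2"
      using has_vector_derivative_zero_constant[of "{0..T}" "\<lambda>t. snd (\<gamma> t) - t * v"] by auto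
    have "snd (\<gamma> T) - T * v = c2" "snd (\<gamma> 0) - 0 * v = c2" using T(1) by (intro c2; simp)+
    then have "snd (\<gamma> T) - T * v = snd (\<gamma> 0) - 0 * v" by simp
    then show ?thesis using gT g0 v_def by auto
  qed
  define f where "f r = T * (Kd r / a r) / (2 * pi)" for r
  have fint: "f r \<in> \<int>" if rI: "r \<in> I" for r
  proof -
    obtain k :: int where k: "T * (Kd r / a r) = 2 * pi * of_int k" using intk[OF rI] by blast
    have "f r = of_int k" unfolding f_def k by simp
    then show ?thesis by simp
  qed
  have contf: "continuous_on I f"
  proof -
    have "continuous_on I (\<lambda>r. T * (Kd r / A 0 r) / (2 * pi))"
      by (intro continuous_intros contA contKd) (auto dest: A0pos)
    then show ?thesis unfolding f_def using A0 by (auto intro: continuous_on_cong[THEN iffD1])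
  qed
  have "f constant_on I"
  proof (rule continuous_discrete_range_constant)
    show "connected I" unfolding I_def by simp
    show "continuous_on I f" by (rule contf)
    fix x assume x: "x \<in> I"
    show "\<exists>e>0. \<forall>y. y \<in> I \<and> f y \<noteq> f x \<longrightarrow> e \<le> norm (f y - f x)"
    proof (intro exI[of _ 1] conjI allI impI)
      fix y assume y: "y \<in> I \<and> f y \<noteq> f x"
      then obtain m n where "f y = of_int m" "f x = of_int n" using fint x by (meson Ints_cases)
      then show "1 \<le> norm (f y - f x)" using y by simp linarith
    qed simp
  qed
  then obtain m where fm: "\<And>r. r \<in> I \<Longrightarrow> f r = m" unfolding constant_on_def by blast
  define c where "c = 2 * pi * m / T"
  have Kdc: "Kd r = c * A 0 r" if "r \<in> I" for r
    using fm[OF that] A0 that apos[OF that] T(1) unfolding f_def c_def by (auto simp: field_simps)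
  have convI: "convex I" unfolding I_def by simp
  show False
  proof (cases "c = 0")
    case True
    then have "\<exists>k. \<forall>x\<in>I. Kf x = k"
      using has_field_derivative_zero_constant[OF convI, of Kf] Kder Kdc
      by (metis has_field_derivative_at_within mult_zero_left)
    then show False using assms(8) gK I_def by metis
  next
    case False
    have "\<exists>C1. \<forall>x\<in>I. c * A 1 x + (Kf x)\<^sup>2 / 2 = C1"
    proof (rule has_field_derivative_zero_constant[OF convI])
      fix x assume x: "x \<in> I"
      have "((\<lambda>x. c * A 1 x + (Kf x)\<^sup>2 / 2) has_real_derivative c * A 2 x + Kf x * Kd x) (at x)"
        using AD'[OF x, of 1] Kder[OF x] by (auto intro!: derivative_eq_intros simp: numeral_2_eq_2)
      moreover have "c * A 2 x + Kf x * Kd x = 0"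
        using Kdc[OF x] A0pos[OF x] unfolding Kf_def by (simp add: field_simps)
      ultimately show "((\<lambda>x. c * A 1 x + (Kf x)\<^sup>2 / 2) has_real_derivative 0) (at x within I)"
        using has_field_derivative_at_within by fastforce
    qed
    then obtain C1 where E1: "\<And>x. x \<in> I \<Longrightarrow> c * A 1 x + (Kf x)\<^sup>2 / 2 = C1" by blast
    have "\<exists>C2. \<forall>x\<in>I. c\<^sup>2 * (A 0 x)\<^sup>2 / 2 + (Kf x) ^ 3 / 6 - C1 * Kf x = C2"
    proof (rule has_field_derivative_zero_constant[OF convI])
      fix x assume x: "x \<in> I"
      have "((\<lambda>x. c\<^sup>2 * (A 0 x)\<^sup>2 / 2 + (Kf x) ^ 3 / 6 - C1 * Kf x) has_real_derivative
              c\<^sup>2 * A 0 x * A 1 x + Kd x * ((Kf x)\<^sup>2 / 2 - C1)) (at x)"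
        using AD'[OF x, of 0] Kder[OF x]
        by (auto intro!: derivative_eq_intros simp: field_simps power2_eq_square)
      moreover have "c\<^sup>2 * A 0 x * A 1 x + Kd x * ((Kf x)\<^sup>2 / 2 - C1) = 0"
      proof -
        have "(Kf x)\<^sup>2 / 2 - C1 = - c * A 1 x" using E1[OF x] by simp
        then show ?thesis using Kdc[OF x] by (simp add: power2_eq_square)
      qed
      ultimately show "((\<lambda>x. c\<^sup>2 * (A 0 x)\<^sup>2 / 2 + (Kf x) ^ 3 / 6 - C1 * Kf x) has_real_derivative 0) (at x within I)"
        using has_field_derivative_at_within by fastforce
    qed
    then obtain C2 where E2: "\<And>x. x \<in> I \<Longrightarrow> c\<^sup>2 * (A 0 x)\<^sup>2 / 2 + (Kf x) ^ 3 / 6 - C1 * Kf x = C2" by blast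
    define F where "F u v = 2 * (C1 - c * v) * (2 * C1 + c * v)\<^sup>2 - 9 * (c\<^sup>2 * u\<^sup>2 / 2 - C2)\<^sup>2" for u v
    have F0: "F (a x) (A 1 x) = 0" if x: "x \<in> I" for x
    proof -
      have k2: "(Kf x)\<^sup>2 = 2 * (C1 - c * A 1 x)" using E1[OF x] by simp
      have "(Kf x) ^ 3 = Kf x * (Kf x)\<^sup>2" by (simp add: power2_eq_square power3_eq_cube)
      then have k3: "Kf x * (2 * C1 + c * A 1 x) = 3 * (c\<^sup>2 * (A 0 x)\<^sup>2 / 2 - C2)"
        using E2[OF x] k2 by (simp add: algebra_simps)
      have "2 * (C1 - c * A 1 x) * (2 * C1 + c * A 1 x)\<^sup>2 = (Kf x * (2 * C1 + c * A 1 x))\<^sup>2"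
        by (simp add: power_mult_distrib k2)
      also have "\<dots> = (3 * (c\<^sup>2 * (A 0 x)\<^sup>2 / 2 - C2))\<^sup>2" by (simp only: k3)
      also have "\<dots> = 9 * (c\<^sup>2 * (A 0 x)\<^sup>2 / 2 - C2)\<^sup>2" by (simp only: power_mult_distrib) simp
      finally show ?thesis unfolding F_def using A0 x by simp
    qed
    have evI: "eventually (\<lambda>s. s \<in> I \<and> R - s \<in> I) (at_right (0::real))"
      using assms(1) unfolding eventually_at_right_field I_def by (intro exI[of _ R]) auto
    have p1: "(a \<longlongrightarrow> 0) (at_right 0) \<and> (A 1 \<longlongrightarrow> 1) (at_right 0)"
      using pole_limits[OF assms(6), of "A 1"] assms(4) dera I_def by auto
    have "((\<lambda>x. F (a x) (A 1 x)) \<longlongrightarrow> F 0 1) (at_right 0)"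
      unfolding F_def using p1 by (intro tendsto_intros) auto
    moreover have "((\<lambda>x. F (a x) (A 1 x)) \<longlongrightarrow> 0) (at_right 0)"
      by (rule tendsto_eventually) (use evI F0 in \<open>auto elim: eventually_mono\<close>)
    ultimately have Fa: "F 0 1 = 0" using tendsto_unique trivial_limit_at_right_real by blast
    have dR: "((\<lambda>s. a (R - s)) has_real_derivative - A 1 (R - s)) (at s)" if "s \<in> {0<..<R}" for s
    proof -
      have "R - s \<in> I" using that I_def by auto
      then have d1: "(a has_real_derivative A 1 ((\<lambda>s. R - s) s)) (at ((\<lambda>s. R - s) s))" using dera by simp
      have d2: "((\<lambda>s. R - s) has_real_derivative -1) (at s)" by (auto intro!: derivative_eq_intros)
      show ?thesis using DERIV_chain2[OF d1 d2] by simp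
    qed
    have p2: "((\<lambda>s. a (R - s)) \<longlongrightarrow> 0) (at_right 0) \<and> ((\<lambda>s. - A 1 (R - s)) \<longlongrightarrow> 1) (at_right 0)"
      using pole_limits[OF assms(7), of "\<lambda>s. - A 1 (R - s)"] assms(4) dR by auto
    have "((\<lambda>s. F (a (R - s)) (- (- A 1 (R - s)))) \<longlongrightarrow> F 0 (- 1)) (at_right 0)"
      unfolding F_def using p2 by (intro tendsto_intros) auto
    moreover have "((\<lambda>s. F (a (R - s)) (- (- A 1 (R - s)))) \<longlongrightarrow> 0) (at_right 0)"
      by (rule tendsto_eventually) (use evI F0 in \<open>auto elim: eventually_mono\<close>)
    ultimately have Fb: "F 0 (- 1) = 0" using tendsto_unique trivial_limit_at_right_real by blast
    have "F 0 1 - F 0 (- 1) = - 4 * c ^ 3" unfolding F_def by (simp add: algebra_simps power2_eq_square power3_eq_cube)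
    then have "c ^ 3 = 0" using Fa Fb by simp
    then show False using False by simp
  qed
qed

end
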